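(* Assume $\Sigma$, $\Sigma^\pi$, $\widehat\Sigma$ are invertible and $\|(\Sigma^\pi)^{1/2}M^\pi(\Sigma^\pi)^{-1/2}\|_2\le1$. Let $\Delta X:=N\widehat\Sigma^{-1}-\Sigma^{-1}$, $\Delta M^\pi:=\widehat M^\pi-M^\pi$, $\Delta Y^\pi:=\frac1N\sum_{n=1}^N\phi(s_n,a_n)\phi^\pi(s_n')^\top-\Sigma M^\pi$, and $\Delta W_h^\pi:=\frac1N\sum_{n=1}^N\phi(s_n,a_n)\big(Q_h^\pi(s_n,a_n)-r_n'-V_{h+1}^\pi(s_n')\big)$. Then: (1) $|E_2|\le\sum_{h=0}^H\sqrt{(\nu_0^\pi)^\top(\Sigma^\pi)^{-1}\nu_0^\pi}\,\|(\Sigma^\pi)^{1/2}\Sigma^{-1/2}\|_2\,\|\Sigma^{-1/2}\Delta W_h^\pi\|_2\Big((1+\|(\Sigma^\pi)^{1/2}\Delta M^\pi(\Sigma^\pi)^{-1/2}\|_2)^h(1+\|\Sigma^{1/2}\Delta X\Sigma^{1/2}\|_2)-1\Big)$; (2) $\|(\Sigma^\pi)^{1/2}\Delta M^\pi(\Sigma^\pi)^{-1/2}\|_2\le\sqrt{\kappa_1}\Big((1+\|\Sigma^{1/2}\Delta X\Sigma^{1/2}\|_2)(1+\|\Sigma^{-1/2}\Delta Y^\pi\Sigma^{-1/2}\|_2)-1\Big)$; (3) if $\|N^{-1}\Sigma^{-1/2}\widehat\Sigma\Sigma^{-1/2}-I\|_2\le\frac12$, then $\|\Sigma^{1/2}\Delta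 X\Sigma^{1/2}\|_2\le2\|N^{-1}\Sigma^{-1/2}\widehat\Sigma\Sigma^{-1/2}-I\|_2$. Here $E_2:=\sum_{h=0}^H\big(N(\widehat\nu_h^\pi)^\top\widehat\Sigma^{-1}-(\nu_h^\pi)^\top\Sigma^{-1}\big)\Delta W_h^\pi$.
   Context: MDP setting with $\mathcal X=\mathcal S\times\mathcal A$, target policy $\pi$, horizon $H$, initial distribution $\xi_0$, value functions $Q_h^\pi(s,a)=\mathbb E^\pi[\sum_{h'=h}^Hr(s_{h'},a_{h'})\mid s_h=s,a_h=a]$, $V_h^\pi(s)=\int Q_h^\pi(s,a)\pi(a\mid s)da$, $V_{H+1}^\pi=0$. $\phi:\mathcal X\to\mathbb R^d$, $\phi^\pi(s)=\int\phi(s,a)\pi(a\mid s)da$, $M^\pi\in\mathbb R^{d\times d}$ any matrix (in the paper, the one with $\phi(s,a)^\top M^\pi=\mathbb E[\phi^\pi(s')^\top\mid s,a]$). Data $\{(s_n,a_n,s_n',r_n')\}_{n=1}^N$, $\lambda\ge0$, $\widehat\Sigma=\lambda I+\sum_n\phi(s_n,a_n)\phi(s_n,a_n)^\top$, $\widehat M^\pi=\widehat\Sigma^{-1}\sum_n\phi(s_n,a_n)\phi^\pi(s_n')^\top$, $\nu_0^\pi=\mathbb E[\phi(s,a)\mid s\sim\xi_0,a\sim\pi(\cdot\mid s)]$, $\nu_h^\pi=((M^\pi)^\top)^h\nu_0^\pi$, $\widehat\nu_h^\pi=((\widehat M^\pi)^\top)^h\nu_0^\pi$. $\Sigma,\Sigma^\pi$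 are symmetric positive definite $d\times d$ matrices (in the paper the data covariance and the covariance of $\phi^\pi$ under an invariant distribution of the target policy), and $\kappa_1:=\mathrm{cond}(\Sigma^{-1/2}\Sigma^\pi\Sigma^{-1/2})$. *)

theory Defs
  imports "HOL-Analysis.Analysis"
begin

definition psd_mat :: "real^'d^'d \<Rightarrow> bool" where
  "psd_mat A \<longleftrightarrow> transpose A = A \<and> (\<forall>x. 0 \<le> x \<bullet> (A *v x))"

definition spd_mat :: "real^'d^'d \<Rightarrow> bool" where
  "spd_mat A \<longleftrightarrow> transpose A = A \<and> (\<forall>x. x \<noteq> 0 \<longrightarrow> 0 < x \<bullet> (A *v x))"

definition msqrt :: "real^'d^'d \<Rightarrow> real^'d^'d" where
  "msqrt A = (THE S. psd_mat S \<and> S ** S = A)"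

definition minvsqrt :: "real^'d^'d \<Rightarrow> real^'d^'d" where
  "minvsqrt A = matrix_inv (msqrt A)"

definition opnorm2 :: "real^'d^'d \<Rightarrow> real" where
  "opnorm2 A = onorm (\<lambda>x. A *v x)"

definition cond2 :: "real^'d^'d \<Rightarrow> real" where
  "cond2 A = opnorm2 A * opnorm2 (matrix_inv A)"

definition outer :: "real^'d \<Rightarrow> real^'d \<Rightarrow> real^'d^'d" where
  "outer u v = (\<chi> i j. u$i * v$j)"

fun matpow :: "real^'d^'d \<Rightarrow> nat \<Rightarrow> real^'d^'d" where
  "matpow A 0 = mat 1"
| "matpow A (Suc k) = A ** matpow A k"

definition phi_pi :: "('s \<Rightarrow> 'a \<Rightarrow> real^'d) \<Rightarrow> ('s \<Rightarrow> 'a measure) \<Rightarrow> 's \<Rightarrow> real^'d" where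
  "phi_pi phi pol s = (\<integral>a. phi s a \<partial>(pol s))"

definition nu0 :: "('s \<Rightarrow> 'a \<Rightarrow> real^'d) \<Rightarrow> ('s \<Rightarrow> 'a measure) \<Rightarrow> 's measure \<Rightarrow> real^'d" where
  "nu0 phi pol xi0 = (\<integral>s. phi_pi phi pol s \<partial>xi0)"

definition V_pi :: "(nat \<Rightarrow> 's \<Rightarrow> 'a \<Rightarrow> real) \<Rightarrow> ('s \<Rightarrow> 'a measure) \<Rightarrow> nat \<Rightarrow> nat \<Rightarrow> 's \<Rightarrow> real" where
  "V_pi Q pol H h s = (if h \<le> H then (\<integral>a. Q h s a \<partial>(pol s)) else 0)"

definition Sigma_hat :: "('s \<Rightarrow> 'a \<Rightarrow> real^'d) \<Rightarrow> real \<Rightarrow> nat \<Rightarrow> (nat \<Rightarrow> 's) \<Rightarrow> (nat \<Rightarrow> 'a) \<Rightarrow> real^'d^'d" where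
  "Sigma_hat phi lam N s a = lam *\<^sub>R mat 1 + (\<Sum>n=1..N. outer (phi (s n) (a n)) (phi (s n) (a n)))"

definition M_hat :: "('s \<Rightarrow> 'a \<Rightarrow> real^'d) \<Rightarrow> ('s \<Rightarrow> 'a measure) \<Rightarrow> real \<Rightarrow> nat \<Rightarrow> (nat \<Rightarrow> 's) \<Rightarrow> (nat \<Rightarrow> 'a) \<Rightarrow> (nat \<Rightarrow> 's) \<Rightarrow> real^'d^'d" where
  "M_hat phi pol lam N s a s' = matrix_inv (Sigma_hat phi lam N s a) **
     (\<Sum>n=1..N. outer (phi (s n) (a n)) (phi_pi phi pol (s' n)))"

end

theory Submission
  imports Defs
begin


lemma sym_dot:
  fixes A :: "real^'d^'d"
  assumes "transpose A = A"
  shows "x \<bullet> (A *v y) = (A *v x) \<bullet> y"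
  by (metis assms dot_lmul_matrix transpose_matrix_vector)

lemma max_quad:
  fixes A :: "real^'d^'d"
  assumes sym: "transpose A = A" and V: "subspace V" and u: "u \<in> V" "norm u = 1"
    and Au: "A *v u \<in> V"
    and mx: "\<And>v. v \<in> V \<Longrightarrow> v \<bullet> (A *v v) \<le> (u \<bullet> (A *v u)) * (v \<bullet> v)"
  shows "A *v u = (u \<bullet> (A *v u)) *\<^sub>R u"
proof -
  define l where "l = u \<bullet> (A *v u)"
  define z where "z = A *v u - l *\<^sub>R u"
  have uu: "u \<bullet> u = 1" using u by (simp add: dot_square_norm)
  have zu: "z \<bullet> u = 0" unfolding z_def l_def using uu
    by (simp add: inner_diff_left inner_diff_right inner_commute)
  have zAu: "z \<bullet> (A *v u) = z \<bullet> z"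
  proof -
    have "z \<bullet> z = z \<bullet> (A *v u) - l * (z \<bullet> u)" unfolding z_def[of] 
      by (simp only: inner_diff_right inner_scaleR_right)
    thus ?thesis using zu by simp
  qed
  have zV: "z \<in> V" unfolding z_def by (meson Au V u(1) subspace_diff subspace_scale)
  have key: "2 * t * (z \<bullet> z) \<le> t^2 * (l * (z \<bullet> z) - z \<bullet> (A *v z))" for t :: real
  proof -
    have vV: "u + t *\<^sub>R z \<in> V" by (meson V zV u(1) subspace_add subspace_scale)
    have e1: "(u + t *\<^sub>R z) \<bullet> (A *v (u + t *\<^sub>R z)) = l + 2 * t * (z \<bullet> z) + t^2 * (z \<bullet> (A *v z))"
    proof -
      have a: "u \<bullet> (A *v z) = z \<bullet> z" using sym_dot[OF sym, of u z] zAu by (simp add: inner_commute)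
      have "(u + t *\<^sub>R z) \<bullet> (A *v (u + t *\<^sub>R z)) = u \<bullet> (A *v u) + t * (u \<bullet> (A *v z)) + t * (z \<bullet> (A *v u)) + t * t * (z \<bullet> (A *v z))"
        by (simp add: matrix_vector_right_distrib matrix_vector_mult_scaleR inner_add_left inner_add_right distrib_left)
      thus ?thesis using a zAu by (simp add: l_def power2_eq_square)
    qed
    have e2: "(u + t *\<^sub>R z) \<bullet> (u + t *\<^sub>R z) = 1 + t^2 * (z \<bullet> z)"
    proof -
      have "(u + t *\<^sub>R z) \<bullet> (u + t *\<^sub>R z) = u \<bullet> u + t * (u \<bullet> z) + t * (z \<bullet> u) + t * t * (z \<bullet> z)"
        by (simp add: inner_add_left inner_add_right distrib_left)
      thus ?thesis using zu uu by (simp add: inner_commute power2_eq_square)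
    qed
    show ?thesis using mx[OF vV] unfolding e1 e2 l_def[symmetric] by (simp add: algebra_simps)
  qed
  have "z \<bullet> z = 0"
  proof (rule ccontr)
    assume "z \<bullet> z \<noteq> 0"
    hence q: "z \<bullet> z > 0" by (simp add: order_less_le)
    define D where "D = l * (z \<bullet> z) - z \<bullet> (A *v z)"
    define t where "t = (z \<bullet> z) / (\<bar>D\<bar> + 1)"
    have t: "t > 0" using q by (simp add: t_def)
    have "2 * t * (z \<bullet> z) \<le> t^2 * D" using key[of t] by (simp add: D_def)
    hence "2 * (z \<bullet> z) \<le> t * D" using t by (simp add: power2_eq_square)
    also have "\<dots> \<le> t * \<bar>D\<bar>" using t by (simp add: mult_left_mono)
    also have "\<dots> < z \<bullet> z" using q by (simp add: t_def field_simps)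
    finally show False using q by simp
  qed
  hence "z = 0" by simp
  thus ?thesis unfolding z_def l_def by simp
qed

lemma eigenbasis_sub:
  fixes A :: "real^'d^'d"
  assumes sym: "transpose A = A"
  shows "subspace V \<Longrightarrow> (\<forall>x\<in>V. A *v x \<in> V) \<Longrightarrow> \<exists>B. B \<subseteq> V \<and> finite B \<and> pairwise orthogonal B \<and>
     (\<forall>u\<in>B. norm u = 1) \<and> span B = V \<and> (\<forall>u\<in>B. A *v u = (u \<bullet> (A *v u)) *\<^sub>R u)"
proof (induction "dim V" arbitrary: V rule: less_induct)
  case less
  note V = less.prems(1) and inv = less.prems(2)
  show ?case
  proof (cases "V = {0}")
    case True
    show ?thesis by (rule exI[of _ "{}"]) (simp add: True)
  next
    case False
    then obtain x where x: "x \<in> V" "x \<noteq> 0" using V subspace_0 by blast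
    define K where "K = V \<inter> sphere 0 1"
    have Kc: "compact K" unfolding K_def by (simp add: V closed_Int_compact closed_subspace)
    have "(1 / norm x) *\<^sub>R x \<in> K" unfolding K_def using x V by (simp add: subspace_scale)
    hence Kne: "K \<noteq> {}" by blast
    have cont: "continuous_on K (\<lambda>v. v \<bullet> (A *v v))"
      by (intro continuous_intros matrix_vector_mult_linear_continuous_on)
    obtain u where uK: "u \<in> K" and umax: "\<And>w. w \<in> K \<Longrightarrow> w \<bullet> (A *v w) \<le> u \<bullet> (A *v u)"
      using continuous_attains_sup[OF Kc Kne cont] by blast
    have uV: "u \<in> V" and un: "norm u = 1" using uK by (auto simp: K_def)
    have uu: "u \<bullet> u = 1" using un by (simp add: dot_square_norm)
    define l where "l = u \<bullet> (A *v u)"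
    have mx: "v \<bullet> (A *v v) \<le> l * (v \<bullet> v)" if vV: "v \<in> V" for v
    proof (cases "v = 0")
      case True thus ?thesis by simp
    next
      case False
      define w where "w = (1 / norm v) *\<^sub>R v"
      have "w \<in> K" unfolding K_def w_def using False vV V by (simp add: subspace_scale)
      hence "w \<bullet> (A *v w) \<le> l" using umax l_def by blast
      moreover have "w \<bullet> (A *v w) = (v \<bullet> (A *v v)) / (norm v)^2"
        unfolding w_def by (simp add: matrix_vector_mult_scaleR power2_eq_square)
      moreover have "v \<bullet> v = (norm v)^2" by (simp add: dot_square_norm)
      ultimately show ?thesis using False by (simp add: field_simps)
    qed
    have eig: "A *v u = l *\<^sub>R u"
      using max_quad[OF sym V uV un] inv uV mx unfolding l_def by blast
    define V' where "V' = V \<inter> {x. u \<bullet> x = 0}"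
    have V'sub: "subspace V'" unfolding V'_def by (simp add: V subspace_hyperplane subspace_inter)
    have inv': "\<forall>x\<in>V'. A *v x \<in> V'"
    proof
      fix y assume y: "y \<in> V'"
      have "u \<bullet> (A *v y) = (A *v u) \<bullet> y" by (rule sym_dot[OF sym])
      also have "\<dots> = 0" using y eig by (simp add: V'_def)
      finally show "A *v y \<in> V'" using y inv by (simp add: V'_def)
    qed
    have "u \<notin> V'" using uu unfolding V'_def by auto
    hence "V' \<subset> V" using uV unfolding V'_def by blast
    hence "dim V' < dim V" using V V'sub by (metis dim_psubset span_eq_iff)
    then obtain B' where B': "B' \<subseteq> V'" "finite B'" "pairwise orthogonal B'" "\<forall>u\<in>B'. norm u = 1"
      "span B' = V'" "\<forall>u\<in>B'. A *v u = (u \<bullet> (A *v u)) *\<^sub>R u"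
      using less.hyps[OF _ V'sub inv'] by blast
    have spanB: "span (insert u B') = V"
    proof
      show "span (insert u B') \<subseteq> V"
        using B'(1) uV V unfolding V'_def by (intro span_minimal) auto
      show "V \<subseteq> span (insert u B')"
      proof
        fix y assume y: "y \<in> V"
        have "y - (u \<bullet> y) *\<^sub>R u \<in> V'" unfolding V'_def
          using y uV V uu by (simp add: subspace_diff subspace_scale inner_diff_right)
        hence a: "y - (u \<bullet> y) *\<^sub>R u \<in> span (insert u B')" using B'(5)
          by (metis span_mono subset_insertI subsetD)
        have b: "(u \<bullet> y) *\<^sub>R u \<in> span (insert u B')" by (simp add: span_base span_mul)
        have "y = (y - (u \<bullet> y) *\<^sub>R u) + (u \<bullet> y) *\<^sub>R u" by simp
        thus "y \<in> span (insert u B')" using span_add[OF a b] by metis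
      qed
    qed
    have orth: "pairwise orthogonal (insert u B')"
    proof -
      have "\<forall>y\<in>B'. y \<noteq> u \<longrightarrow> orthogonal u y \<and> orthogonal y u"
        using B'(1) unfolding V'_def orthogonal_def by (auto simp: inner_commute)
      thus ?thesis using B'(3) by (simp add: pairwise_insert)
    qed
    show ?thesis
      apply (rule exI[of _ "insert u B'"])
      using B' uV un eig spanB orth V'_def l_def by auto
  qed
qed

lemma eigenbasis:
  fixes A :: "real^'d^'d"
  assumes sym: "transpose A = A"
  shows "\<exists>B. finite B \<and> pairwise orthogonal B \<and>
     (\<forall>u\<in>B. norm u = 1) \<and> span B = UNIV \<and> (\<forall>u\<in>B. A *v u = (u \<bullet> (A *v u)) *\<^sub>R u)"
  using eigenbasis_sub[OF sym, of UNIV] by auto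




lemma outer_mv: "outer u v *v w = (v \<bullet> w) *\<^sub>R (u :: real^'d)"
  by (simp add: vec_eq_iff matrix_vector_mult_def outer_def inner_vec_def sum_distrib_left mult.assoc mult.commute mult.left_commute)

lemma sum_mv: "sum f B *v (w::real^'d) = (\<Sum>u\<in>B. f u *v w)"
  by (induction B rule: infinite_finite_induct) (simp_all add: matrix_vector_mult_add_rdistrib)

lemma scaleR_mv: "(c *\<^sub>R M) *v (w::real^'d) = c *\<^sub>R (M *v w)"
  by (simp add: scaleR_matrix_vector_assoc)

lemma psd_root_eig:
  fixes A S :: "real^'d^'d"
  assumes S: "psd_mat S" and SS: "S ** S = A" and u: "A *v u = l *\<^sub>R u" and l: "0 \<le> l"
  shows "S *v u = sqrt l *\<^sub>R u"
proof -
  define r where "r = sqrt l"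
  have r: "0 \<le> r" "r * r = l" using l by (auto simp: r_def)
  have Ssym: "transpose S = S" and Spos: "\<And>x. 0 \<le> x \<bullet> (S *v x)" using S by (auto simp: psd_mat_def)
  define v where "v = S *v u - r *\<^sub>R u"
  have SSu: "S *v (S *v u) = l *\<^sub>R u" using u SS by (simp add: matrix_vector_mul_assoc)
  have Sv: "S *v v = - r *\<^sub>R v"
    unfolding v_def using SSu r(2)[symmetric]
    by (simp add: matrix_vector_mult_diff_distrib matrix_vector_mult_scaleR algebra_simps)
  have vv: "v \<bullet> v = -2 * r * (v \<bullet> u)"
  proof -
    have "v \<bullet> v = v \<bullet> (S *v u) - r * (v \<bullet> u)" unfolding v_def[of] 
      by (simp only: inner_diff_right inner_scaleR_right)
    also have "v \<bullet> (S *v u) = (S *v v) \<bullet> u" by (rule sym_dot[OF Ssym])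
    finally show ?thesis using Sv by simp
  qed
  have "0 \<le> v \<bullet> (S *v v)" by (rule Spos)
  hence h: "0 \<le> - r * (v \<bullet> v)" using Sv by simp
  have "v \<bullet> v = 0"
  proof (cases "r = 0")
    case True thus ?thesis using vv by simp
  next
    case False
    hence "r > 0" using r by simp
    hence "v \<bullet> v \<le> 0" using h by (simp add: mult_le_0_iff)
    thus ?thesis using inner_ge_zero[of v] by linarith
  qed
  hence "v = 0" by simp
  thus ?thesis unfolding v_def r_def by simp
qed

lemma psd_eigval_nonneg:
  fixes A :: "real^'d^'d"
  assumes "psd_mat A" shows "0 \<le> u \<bullet> (A *v u)"
  using assms by (simp add: psd_mat_def)

lemma psd_sqrt_unique:
  fixes A S1 S2 :: "real^'d^'d"
  assumes A: "psd_mat A" and S1: "psd_mat S1" "S1 ** S1 = A" and S2: "psd_mat S2" "S2 ** S2 = A"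
  shows "S1 = S2"
proof -
  have sym: "transpose A = A" using A by (simp add: psd_mat_def)
  obtain B where B: "finite B" "pairwise orthogonal B" "\<forall>u\<in>B. norm u = 1" "span B = UNIV"
    "\<forall>u\<in>B. A *v u = (u \<bullet> (A *v u)) *\<^sub>R u" using eigenbasis[OF sym] by blast
  have "S1 *v x = S2 *v x" for x
  proof (rule linear_eq_on_span[of "(*v) S1" "(*v) S2" B])
    show "linear ((*v) S1)" "linear ((*v) S2)" by (rule matrix_vector_mul_linear)+
    show "x \<in> span B" using B(4) by simp
    fix w assume w: "w \<in> B"
    show "S1 *v w = S2 *v w"
      using psd_root_eig[OF S1 B(5)[rule_format, OF w] psd_eigval_nonneg[OF A]]
        psd_root_eig[OF S2 B(5)[rule_format, OF w] psd_eigval_nonneg[OF A]] by simp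
  qed
  thus ?thesis by (simp add: matrix_eq)
qed

lemma psd_sqrt_exists:
  fixes A :: "real^'d^'d"
  assumes A: "psd_mat A"
  shows "\<exists>S. psd_mat S \<and> S ** S = A"
proof -
  have sym: "transpose A = A" using A by (simp add: psd_mat_def)
  obtain B where B: "finite B" "pairwise orthogonal B" "\<forall>u\<in>B. norm u = 1" "span B = UNIV"
    "\<forall>u\<in>B. A *v u = (u \<bullet> (A *v u)) *\<^sub>R u" using eigenbasis[OF sym] by blast
  define c where "c u = sqrt (u \<bullet> (A *v u))" for u
  define S where "S = (\<Sum>u\<in>B. c u *\<^sub>R outer u u)"
  have c0: "0 \<le> c u" for u unfolding c_def using psd_eigval_nonneg[OF A] by simp
  have Sx: "S *v x = (\<Sum>u\<in>B. (c u * (u \<bullet> x)) *\<^sub>R u)" for x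
    unfolding S_def sum_mv scaleR_mv outer_mv by simp
  have Sw: "S *v w = c w *\<^sub>R w" if w: "w \<in> B" for w
  proof -
    have "S *v w = (c w * (w \<bullet> w)) *\<^sub>R w + (\<Sum>u\<in>B - {w}. (c u * (u \<bullet> w)) *\<^sub>R u)"
      unfolding Sx using B(1) w by (simp add: sum.remove)
    also have "(\<Sum>u\<in>B - {w}. (c u * (u \<bullet> w)) *\<^sub>R u) = 0"
      using B(2) w by (intro sum.neutral) (auto simp: pairwise_def orthogonal_def)
    also have "w \<bullet> w = 1" using B(3) w by (simp add: dot_square_norm)
    finally show ?thesis by simp
  qed
  have Ssym: "transpose S = S"
    unfolding S_def by (simp add: vec_eq_iff transpose_def sum_component outer_def mult.commute)
  have Spos: "0 \<le> x \<bullet> (S *v x)" for x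
    unfolding Sx inner_sum_right using c0 by (auto intro!: sum_nonneg simp: inner_commute mult.assoc)
  have "(S ** S) *v x = A *v x" for x
  proof (rule linear_eq_on_span[of "(*v) (S ** S)" "(*v) A" B])
    show "linear ((*v) (S ** S))" "linear ((*v) A)" by (rule matrix_vector_mul_linear)+
    show "x \<in> span B" using B(4) by simp
    fix w assume w: "w \<in> B"
    have "(S ** S) *v w = (c w * c w) *\<^sub>R w"
      by (simp add: matrix_vector_mul_assoc[symmetric] Sw[OF w] matrix_vector_mult_scaleR)
    also have "c w * c w = w \<bullet> (A *v w)" unfolding c_def using psd_eigval_nonneg[OF A] by simp
    finally show "(S ** S) *v w = A *v w" using B(5) w by simp
  qed
  hence "S ** S = A" by (simp add: matrix_eq)
  moreover have "psd_mat S" using Ssym Spos by (simp add: psd_mat_def)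
  ultimately show ?thesis by blast
qed

lemma msqrt:
  fixes A :: "real^'d^'d"
  assumes "psd_mat A"
  shows "psd_mat (msqrt A) \<and> msqrt A ** msqrt A = A"
proof -
  have "\<exists>!S. psd_mat S \<and> S ** S = A"
    using psd_sqrt_exists[OF assms] psd_sqrt_unique[OF assms] by blast
  thus ?thesis unfolding msqrt_def by (rule theI')
qed




type_synonym 'd m = "real^'d^'d"

lemma mm_eqI: "(\<And>x. (A::real^'d^'d) *v x = B *v x) \<Longrightarrow> A = B"
  by (simp add: matrix_eq)

lemma mm_add_l: "(A::real^'d^'d) ** (B + C::real^'d^'d) = A ** B + A ** C"
  by (rule mm_eqI) (simp add: matrix_vector_mul_assoc[symmetric] matrix_vector_mult_add_rdistrib matrix_vector_right_distrib)
lemma mm_add_r: "((A::real^'d^'d) + B) ** (C::real^'d^'d) = A ** C + B ** C"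
  by (rule mm_eqI) (simp add: matrix_vector_mul_assoc[symmetric] matrix_vector_mult_add_rdistrib)
lemma mm_diff_l: "(A::real^'d^'d) ** (B - C::real^'d^'d) = A ** B - A ** C"
  by (rule mm_eqI) (simp add: matrix_vector_mul_assoc[symmetric] matrix_vector_mult_diff_rdistrib matrix_vector_mult_diff_distrib)
lemma mm_diff_r: "((A::real^'d^'d) - B) ** (C::real^'d^'d) = A ** C - B ** C"
  by (rule mm_eqI) (simp add: matrix_vector_mul_assoc[symmetric] matrix_vector_mult_diff_rdistrib)
lemma mm_scale_l: "(c *\<^sub>R (A::real^'d^'d)) ** (B::real^'d^'d) = c *\<^sub>R (A ** B)"
  by (rule mm_eqI) (simp add: matrix_vector_mul_assoc[symmetric] scaleR_mv)
lemma mm_scale_r: "(A::real^'d^'d) ** (c *\<^sub>R (B::real^'d^'d)) = c *\<^sub>R (A ** B)"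
  by (rule mm_eqI) (simp add: matrix_vector_mul_assoc[symmetric] scaleR_mv matrix_vector_mult_scaleR)

lemma dot_tr: "x \<bullet> ((A::real^'d^'d) *v y) = (transpose A *v x) \<bullet> y"
  by (metis dot_lmul_matrix transpose_matrix_vector)

lemma minv: "invertible (A::real^'d^'d) \<Longrightarrow> A ** matrix_inv A = mat 1 \<and> matrix_inv A ** A = mat 1"
  unfolding invertible_def matrix_inv_def by (rule someI_ex)

lemma minv_unique: assumes "(A::real^'d^'d) ** B = mat 1" shows "matrix_inv A = B"
proof -
  have BA: "B ** A = mat 1" using assms matrix_left_right_inverse by blast
  hence "invertible A" using assms invertible_def by blast
  hence "matrix_inv A ** A = mat 1" using minv by blast
  hence "matrix_inv A = matrix_inv A ** (A ** B)" using assms by simp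
  also have "\<dots> = B" by (simp add: matrix_mul_assoc \<open>matrix_inv A ** A = mat 1\<close>)
  finally show ?thesis .
qed

lemma minv_sym: assumes "transpose (A::real^'d^'d) = A" "invertible A"
  shows "transpose (matrix_inv A) = matrix_inv A"
proof -
  have "A ** transpose (matrix_inv A) = mat 1"
    using minv[OF assms(2)] matrix_transpose_mul[of "matrix_inv A" A] assms(1) by simp
  thus ?thesis using minv_unique by metis
qed

lemma spd_psd: "spd_mat A \<Longrightarrow> psd_mat A"
  unfolding spd_mat_def psd_mat_def by (metis inner_zero_left order_le_less)

lemma spd_inv: assumes "spd_mat (A::real^'d^'d)" shows "invertible A"
proof -
  have "inj ((*v) A)" unfolding vec.inj_iff_eq_0
  proof (intro allI impI)
    fix x assume "A *v x = 0"
    thus "x = 0" using assms unfolding spd_mat_def by (metis inner_zero_right less_irrefl)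
  qed
  thus ?thesis using matrix_left_invertible_injective invertible_left_inverse by blast
qed

lemma sqrt_facts:
  fixes A :: "real^'d^'d"
  assumes "spd_mat A"
  shows "transpose (msqrt A) = msqrt A" "msqrt A ** msqrt A = A"
    "msqrt A ** minvsqrt A = mat 1" "minvsqrt A ** msqrt A = mat 1"
    "transpose (minvsqrt A) = minvsqrt A" "matrix_inv A = minvsqrt A ** minvsqrt A"
proof -
  have m: "psd_mat (msqrt A)" "msqrt A ** msqrt A = A" using msqrt[OF spd_psd[OF assms]] by auto
  show t: "transpose (msqrt A) = msqrt A" using m by (simp add: psd_mat_def)
  show "msqrt A ** msqrt A = A" by fact
  have "det A \<noteq> 0" using spd_inv[OF assms] invertible_det_nz by blast
  hence "det (msqrt A) \<noteq> 0" using m(2) det_mul by (metis mult_zero_left)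
  hence i: "invertible (msqrt A)" using invertible_det_nz by blast
  show "msqrt A ** minvsqrt A = mat 1" "minvsqrt A ** msqrt A = mat 1"
    using minv[OF i] by (auto simp: minvsqrt_def)
  show "transpose (minvsqrt A) = minvsqrt A" unfolding minvsqrt_def by (rule minv_sym[OF t i])
  have "A ** (minvsqrt A ** minvsqrt A) = msqrt A ** ((msqrt A ** minvsqrt A) ** minvsqrt A)"
    using m(2) by (simp add: matrix_mul_assoc)
  also have "\<dots> = mat 1" using minv[OF i] by (simp add: minvsqrt_def)
  finally have "A ** (minvsqrt A ** minvsqrt A) = mat 1" .
  thus "matrix_inv A = minvsqrt A ** minvsqrt A" by (rule minv_unique)
qed

lemma op_mv: "norm ((A::real^'d^'d) *v x) \<le> opnorm2 A * norm x"
  unfolding opnorm2_def by (rule onorm[OF matrix_vector_mul_bounded_linear])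

lemma op_nonneg: "0 \<le> opnorm2 (A::real^'d^'d)"
  unfolding opnorm2_def by (rule onorm_pos_le[OF matrix_vector_mul_bounded_linear])

lemma op_le: "0 \<le> b \<Longrightarrow> (\<And>x. norm ((A::real^'d^'d) *v x) \<le> b * norm x) \<Longrightarrow> opnorm2 A \<le> b"
  unfolding opnorm2_def by (rule onorm_bound)

lemma op_mul: "opnorm2 ((A::real^'d^'d) ** (B::real^'d^'d)) \<le> opnorm2 A * opnorm2 B"
proof (rule op_le)
  show "0 \<le> opnorm2 A * opnorm2 B" by (simp add: op_nonneg)
  fix x
  have "norm ((A ** B) *v x) = norm (A *v (B *v x))" by (simp add: matrix_vector_mul_assoc)
  also have "\<dots> \<le> opnorm2 A * norm (B *v x)" by (rule op_mv)
  also have "\<dots> \<le> opnorm2 A * (opnorm2 B * norm x)" by (simp add: op_mv op_nonneg mult_left_mono)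
  finally show "norm ((A ** B) *v x) \<le> opnorm2 A * opnorm2 B * norm x" by (simp add: mult.assoc)
qed

lemma op_add: "opnorm2 ((A::real^'d^'d) + B) \<le> opnorm2 A + opnorm2 B"
proof (rule op_le)
  show "0 \<le> opnorm2 A + opnorm2 B" by (simp add: op_nonneg)
  fix x
  have "norm ((A + B) *v x) \<le> norm (A *v x) + norm (B *v x)"
    by (simp add: matrix_vector_mult_add_rdistrib norm_triangle_ineq)
  also have "\<dots> \<le> opnorm2 A * norm x + opnorm2 B * norm x" by (intro add_mono op_mv)
  finally show "norm ((A + B) *v x) \<le> (opnorm2 A + opnorm2 B) * norm x" by (simp add: algebra_simps)
qed

lemma op_tr_le: "opnorm2 (transpose (A::real^'d^'d)) \<le> opnorm2 A"
proof (rule op_le[OF op_nonneg])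
  fix y
  define z where "z = transpose A *v y"
  have "norm z ^ 2 = z \<bullet> z" by (simp add: dot_square_norm)
  also have "\<dots> = y \<bullet> (A *v z)" unfolding z_def by (simp add: dot_tr)
  also have "\<dots> \<le> norm y * norm (A *v z)" by (rule norm_cauchy_schwarz)
  also have "\<dots> \<le> norm y * (opnorm2 A * norm z)" by (simp add: op_mv mult_left_mono)
  finally have h: "norm z * norm z \<le> (opnorm2 A * norm y) * norm z" by (simp add: power2_eq_square algebra_simps)
  show "norm (transpose A *v y) \<le> opnorm2 A * norm y"
  proof (cases "norm z = 0")
    case True thus ?thesis by (simp add: z_def op_nonneg)
  next
    case False thus ?thesis using h unfolding z_def[symmetric] by (simp add: mult_le_cancel_right)
  qed
qed

lemma op_tr: "opnorm2 (transpose (A::real^'d^'d)) = opnorm2 A"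
  using op_tr_le[of A] op_tr_le[of "transpose A"] by simp

lemma op_gram: "opnorm2 (A::real^'d^'d) ^ 2 \<le> opnorm2 (transpose A ** A)"
proof -
  have "opnorm2 A \<le> sqrt (opnorm2 (transpose A ** A))"
  proof (rule op_le)
    show "0 \<le> sqrt (opnorm2 (transpose A ** A))" by (simp add: op_nonneg)
    fix x
    have "norm (A *v x) ^ 2 = (A *v x) \<bullet> (A *v x)" by (simp add: dot_square_norm)
    also have "\<dots> = x \<bullet> ((transpose A ** A) *v x)"
      using dot_tr[of x "transpose A" "A *v x"] by (simp only: matrix_vector_mul_assoc[symmetric] transpose_transpose)
    also have "\<dots> \<le> norm x * norm ((transpose A ** A) *v x)" by (rule norm_cauchy_schwarz)
    also have "\<dots> \<le> norm x * (opnorm2 (transpose A ** A) * norm x)" by (simp add: op_mv mult_left_mono)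
    finally have "norm (A *v x) ^ 2 \<le> (sqrt (opnorm2 (transpose A ** A)) * norm x) ^ 2"
      by (simp add: power_mult_distrib op_nonneg power2_eq_square algebra_simps)
    thus "norm (A *v x) \<le> sqrt (opnorm2 (transpose A ** A)) * norm x"
      by (rule power2_le_imp_le) (simp add: op_nonneg)
  qed
  hence "opnorm2 A ^ 2 \<le> (sqrt (opnorm2 (transpose A ** A))) ^ 2" by (intro power_mono op_nonneg)
  thus ?thesis using op_nonneg[of "transpose A ** A"] by simp
qed




lemma mv_neg: "(- (A::real^'d^'d)) *v x = - (A *v x)"
  by (simp add: matrix_vector_mult_def vec_eq_iff sum_negf)

lemma part3:
  fixes Sig Shat :: "real^'d^'d" and N :: nat
  assumes Sig: "spd_mat Sig" and Sh: "invertible Shat" and N: "0 < N"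
    and small: "opnorm2 ((1 / real N) *\<^sub>R (minvsqrt Sig ** Shat ** minvsqrt Sig) - mat 1) \<le> 1/2"
  shows "opnorm2 (msqrt Sig ** (real N *\<^sub>R matrix_inv Shat - matrix_inv Sig) ** msqrt Sig)
     \<le> 2 * opnorm2 ((1 / real N) *\<^sub>R (minvsqrt Sig ** Shat ** minvsqrt Sig) - mat 1)"
proof -
  define R where "R = msqrt Sig"
  define Ri where "Ri = minvsqrt Sig"
  define Shi where "Shi = matrix_inv Shat"
  note sf = sqrt_facts[OF Sig, folded R_def Ri_def]
  have ShS: "Shat ** Shi = mat 1" using minv[OF Sh] by (simp add: Shi_def)
  define T where "T = (1 / real N) *\<^sub>R (Ri ** Shat ** Ri)"
  define E where "E = T - mat 1"
  define e where "e = opnorm2 E"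
  define U where "U = real N *\<^sub>R (R ** Shi ** R)"
  have TU: "T ** U = mat 1"
  proof -
    have "T ** U = ((1 / real N) * real N) *\<^sub>R (Ri ** Shat ** Ri ** (R ** Shi ** R))"
      unfolding T_def U_def by (simp add: mm_scale_l mm_scale_r)
    also have "Ri ** Shat ** Ri ** (R ** Shi ** R) = Ri ** (Shat ** ((Ri ** R) ** Shi)) ** R"
      by (simp add: matrix_mul_assoc)
    also have "\<dots> = mat 1" using sf ShS by simp
    finally show ?thesis using N by simp
  qed
  have X: "R ** (real N *\<^sub>R Shi - matrix_inv Sig) ** R = U - mat 1"
  proof -
    have "R ** (real N *\<^sub>R Shi - matrix_inv Sig) ** R = U - (R ** Ri) ** (Ri ** R)"
      unfolding U_def sf(6) by (simp add: mm_diff_l mm_diff_r mm_scale_l mm_scale_r matrix_mul_assoc)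
    thus ?thesis using sf by simp
  qed
  have UE: "U - mat 1 = - (U ** E)"
  proof -
    have "U ** T = mat 1" using TU matrix_left_right_inverse by blast
    thus ?thesis unfolding E_def by (simp add: mm_diff_l)
  qed
  have Ubd: "norm (U *v w) \<le> 2 * norm w" for w
  proof -
    define v where "v = U *v w"
    have "T *v v = w" unfolding v_def by (simp add: matrix_vector_mul_assoc TU)
    moreover have "T = E + mat 1" unfolding E_def by simp
    ultimately have w: "w = v + E *v v" by (simp add: matrix_vector_mult_add_rdistrib add.commute)
    have "norm v - norm (E *v v) \<le> norm w" using w norm_triangle_ineq2[of v "- (E *v v)"] by simp
    moreover have "norm (E *v v) \<le> e * norm v" unfolding e_def by (rule op_mv)
    moreover have "e * norm v \<le> (1/2) * norm v"
      using small by (intro mult_right_mono) (simp_all add: e_def E_def T_def Ri_def)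
    ultimately show ?thesis unfolding v_def[symmetric] by linarith
  qed
  have "opnorm2 (U - mat 1) \<le> 2 * e"
  proof (rule op_le)
    show "0 \<le> 2 * e" by (simp add: e_def op_nonneg)
    fix x
    have "norm ((U - mat 1) *v x) = norm (U *v (E *v x))" by (simp add: UE mv_neg matrix_vector_mul_assoc)
    also have "\<dots> \<le> 2 * norm (E *v x)" by (rule Ubd)
    also have "\<dots> \<le> 2 * (e * norm x)" unfolding e_def by (simp add: op_mv)
    finally show "norm ((U - mat 1) *v x) \<le> 2 * e * norm x" by simp
  qed
  thus ?thesis using X by (simp add: R_def Shi_def e_def E_def T_def Ri_def)
qed




lemma op_mul3: "opnorm2 ((A::real^'d^'d) ** (B::real^'d^'d) ** (C::real^'d^'d)) \<le> opnorm2 A * opnorm2 B * opnorm2 C"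
  by (meson op_mul op_nonneg mult_right_mono order_trans)

lemma op_mul4: "opnorm2 ((A::real^'d^'d) ** (B::real^'d^'d) ** (C::real^'d^'d) ** (D::real^'d^'d)) \<le> opnorm2 A * opnorm2 B * opnorm2 C * opnorm2 D"
  by (meson op_mul op_mul3 op_nonneg mult_right_mono order_trans)

lemma cancel_rules:
  assumes "(R::real^'d^'d) ** Ri = mat 1"
  shows "R ** (Ri ** X) = X"
  using assms by (simp add: matrix_mul_assoc)

lemma part2:
  fixes Sig SigP Shat M C :: "real^'d^'d" and N :: nat
  assumes Sig: "spd_mat Sig" and SigP: "spd_mat SigP" and Sh: "invertible Shat" and N: "0 < N"
    and Mc: "opnorm2 (msqrt SigP ** M ** minvsqrt SigP) \<le> 1"
  shows "opnorm2 (msqrt SigP ** (matrix_inv Shat ** C - M) ** minvsqrt SigP) \<le>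
     sqrt (cond2 (minvsqrt Sig ** SigP ** minvsqrt Sig)) *
           ((1 + opnorm2 (msqrt Sig ** (real N *\<^sub>R matrix_inv Shat - matrix_inv Sig) ** msqrt Sig))
             * (1 + opnorm2 (minvsqrt Sig ** ((1 / real N) *\<^sub>R C - Sig ** M) ** minvsqrt Sig)) - 1)"
proof -
  define R where "R = msqrt Sig"
  define Ri where "Ri = minvsqrt Sig"
  define P where "P = msqrt SigP"
  define Pi where "Pi = minvsqrt SigP"
  define Shi where "Shi = matrix_inv Shat"
  define DX where "DX = real N *\<^sub>R Shi - matrix_inv Sig"
  define DY where "DY = (1 / real N) *\<^sub>R C - Sig ** M"
  define DM where "DM = Shi ** C - M"
  note sf = sqrt_facts[OF Sig, folded R_def Ri_def]
  note pf = sqrt_facts[OF SigP, folded P_def Pi_def]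
  have c1: "R ** (Ri ** X) = X" "Ri ** (R ** X) = X" "P ** (Pi ** X) = X" "Pi ** (P ** X) = X" for X
    using cancel_rules sf pf by blast+
  have SigR: "Sig = R ** R" "SigP = P ** P" using sf pf by simp_all
  have DMeq: "DM = matrix_inv Sig ** DY + DX ** DY + DX ** Sig ** M"
  proof -
    have X': "matrix_inv Sig + DX = real N *\<^sub>R Shi" unfolding DX_def by simp
    have Y': "DY + Sig ** M = (1 / real N) *\<^sub>R C" unfolding DY_def by simp
    have "(matrix_inv Sig + DX) ** (DY + Sig ** M) = Shi ** C"
      unfolding X' Y' using N by (simp add: mm_scale_l mm_scale_r)
    moreover have "(matrix_inv Sig + DX) ** (DY + Sig ** M) =
       matrix_inv Sig ** DY + M + DX ** DY + DX ** Sig ** M"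
      unfolding sf(6) unfolding SigR by (simp add: mm_add_l mm_add_r matrix_mul_assoc[symmetric] c1 algebra_simps)
    ultimately show ?thesis unfolding DM_def by (simp add: algebra_simps)
  qed
  define a where "a = opnorm2 (P ** Ri)"
  define b where "b = opnorm2 (R ** Pi)"
  define x where "x = opnorm2 (R ** DX ** R)"
  define y where "y = opnorm2 (Ri ** DY ** Ri)"
  define m where "m = opnorm2 (P ** M ** Pi)"
  have nn: "0 \<le> a" "0 \<le> b" "0 \<le> x" "0 \<le> y" "0 \<le> m" "m \<le> 1"
    using Mc by (simp_all add: a_def b_def x_def y_def m_def op_nonneg P_def Pi_def)
  have split: "P ** DM ** Pi = (P ** Ri) ** (Ri ** DY ** Ri) ** (R ** Pi)
     + (P ** Ri) ** (R ** DX ** R) ** (Ri ** DY ** Ri) ** (R ** Pi)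
     + (P ** Ri) ** (R ** DX ** R) ** (R ** Pi) ** (P ** M ** Pi)"
    unfolding DMeq sf(6) unfolding SigR
    by (simp add: mm_add_l mm_add_r matrix_mul_assoc[symmetric] c1)
  have "opnorm2 (P ** DM ** Pi) \<le> a * y * b + a * x * y * b + a * x * b * m"
    unfolding split a_def b_def x_def y_def m_def
    by (meson op_add op_mul3 op_mul4 add_mono order_trans)
  also have "\<dots> \<le> (a * b) * ((1 + x) * (1 + y) - 1)"
  proof -
    have "a * x * b * m \<le> a * x * b" using nn by (simp add: mult_left_le)
    thus ?thesis by (simp add: algebra_simps)
  qed
  also have "\<dots> \<le> sqrt (cond2 (Ri ** SigP ** Ri)) * ((1 + x) * (1 + y) - 1)"
  proof (rule mult_right_mono)
    show "0 \<le> (1 + x) * (1 + y) - 1" using nn by (simp add: algebra_simps)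
    define K where "K = Ri ** SigP ** Ri"
    have K1: "K = transpose (P ** Ri) ** (P ** Ri)"
      unfolding K_def SigR matrix_transpose_mul pf(1) sf(5) by (simp add: matrix_mul_assoc)
    have "K ** (R ** Pi ** (Pi ** R)) = mat 1"
      unfolding K_def SigR by (simp add: matrix_mul_assoc[symmetric] c1 sf(4))
    hence K2: "matrix_inv K = transpose (Pi ** R) ** (Pi ** R)"
      unfolding matrix_transpose_mul pf(5) sf(1) by (rule minv_unique)
    have a2: "a ^ 2 \<le> opnorm2 K" unfolding a_def K1 by (rule op_gram)
    have "b = opnorm2 (Pi ** R)" unfolding b_def
      using op_tr[of "Pi ** R"] by (simp add: matrix_transpose_mul pf(5) sf(1))
    hence b2: "b ^ 2 \<le> opnorm2 (matrix_inv K)" unfolding K2 by (simp add: op_gram)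
    have "(a * b) ^ 2 \<le> opnorm2 K * opnorm2 (matrix_inv K)"
      unfolding power_mult_distrib by (rule mult_mono[OF a2 b2]) (simp_all add: op_nonneg)
    thus "a * b \<le> sqrt (cond2 (Ri ** SigP ** Ri))"
      unfolding cond2_def K_def[symmetric] by (rule real_le_rsqrt)
  qed
  finally show ?thesis
    by (simp add: R_def Ri_def P_def Pi_def Shi_def DX_def DY_def DM_def x_def y_def)
qed




lemma matpow_Suc_mv: "matpow A (Suc h) *v v = A *v (matpow A h *v v)"
  by (simp add: matrix_vector_mul_assoc)

lemma transpose_diff: "transpose ((A::real^'d^'d) - B) = transpose A - transpose B"
  by (simp add: vec_eq_iff transpose_def)

lemma part1:
  fixes Sig SigP Shat M Mhat :: "real^'d^'d" and N H :: nat and v0 :: "real^'d"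
    and DW :: "nat \<Rightarrow> real^'d" and nu nuhat :: "nat \<Rightarrow> real^'d"
  assumes Sig: "spd_mat Sig" and SigP: "spd_mat SigP" and Sh: "invertible Shat" and N: "0 < N"
    and Mc: "opnorm2 (msqrt SigP ** M ** minvsqrt SigP) \<le> 1"
    and nu: "nu = (\<lambda>h. matpow (transpose M) h *v v0)"
    and nuhat: "nuhat = (\<lambda>h. matpow (transpose Mhat) h *v v0)"
  shows "\<bar>\<Sum>h=0..H. (real N *\<^sub>R (nuhat h v* matrix_inv Shat) - nu h v* matrix_inv Sig) \<bullet> DW h\<bar>
     \<le> (\<Sum>h=0..H. sqrt (v0 \<bullet> (matrix_inv SigP *v v0))
              * opnorm2 (msqrt SigP ** minvsqrt Sig) * norm (minvsqrt Sig *v DW h)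
              * ((1 + opnorm2 (msqrt SigP ** (Mhat - M) ** minvsqrt SigP)) ^ h
                   * (1 + opnorm2 (msqrt Sig ** (real N *\<^sub>R matrix_inv Shat - matrix_inv Sig) ** msqrt Sig)) - 1))"
proof -
  define R where "R = msqrt Sig"
  define Ri where "Ri = minvsqrt Sig"
  define P where "P = msqrt SigP"
  define Pi where "Pi = minvsqrt SigP"
  define Shi where "Shi = matrix_inv Shat"
  define DX where "DX = real N *\<^sub>R Shi - matrix_inv Sig"
  define Mt where "Mt = transpose M"
  define Mht where "Mht = transpose Mhat"
  note sf = sqrt_facts[OF Sig, folded R_def Ri_def]
  note pf = sqrt_facts[OF SigP, folded P_def Pi_def]
  have c1: "R ** (Ri ** X) = X" "Ri ** (R ** X) = X" "P ** (Pi ** X) = X" "Pi ** (P ** X) = X" for X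
    using cancel_rules sf pf by blast+
  have v1: "R *v (Ri *v z) = z" "Ri *v (R *v z) = z" "P *v (Pi *v z) = z" "Pi *v (P *v z) = z" for z
    using sf pf by (simp_all add: matrix_vector_mul_assoc)
  define c where "c = norm (Pi *v v0)"
  define d where "d = opnorm2 (P ** (Mhat - M) ** Pi)"
  define x where "x = opnorm2 (R ** DX ** R)"
  define a where "a = opnorm2 (P ** Ri)"
  have nn: "0 \<le> c" "0 \<le> d" "0 \<le> x" "0 \<le> a"
    by (simp_all add: c_def d_def x_def a_def op_nonneg)
  have csq: "sqrt (v0 \<bullet> (matrix_inv SigP *v v0)) = c"
  proof -
    have "v0 \<bullet> (matrix_inv SigP *v v0) = v0 \<bullet> (Pi *v (Pi *v v0))"
      by (simp add: pf(6) matrix_vector_mul_assoc Pi_def)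
    also have "\<dots> = (Pi *v v0) \<bullet> (Pi *v v0)" using dot_tr[of v0 Pi] pf(5) by simp
    also have "\<dots> = c ^ 2" by (simp add: c_def dot_square_norm)
    finally show ?thesis using nn by simp
  qed
  define B where "B = Pi ** Mt ** P"
  define Bh where "Bh = Pi ** Mht ** P"
  have Btr: "B = transpose (P ** M ** Pi)" unfolding B_def Mt_def
    by (simp add: matrix_transpose_mul pf(1) pf(5) matrix_mul_assoc)
  have Bd: "Bh - B = transpose (P ** (Mhat - M) ** Pi)" unfolding B_def Bh_def Mt_def Mht_def
    by (simp add: matrix_transpose_mul pf(1) pf(5) matrix_mul_assoc mm_diff_l mm_diff_r transpose_diff)
  have nB: "opnorm2 B \<le> 1" unfolding Btr op_tr P_def Pi_def using Mc by simp
  have nBd: "opnorm2 (Bh - B) = d" unfolding Bd d_def by (rule op_tr)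
  have nBh: "opnorm2 Bh \<le> 1 + d"
  proof -
    have "Bh = B + (Bh - B)" by simp
    hence "opnorm2 Bh \<le> opnorm2 B + opnorm2 (Bh - B)" by (metis op_add)
    thus ?thesis using nB nBd by simp
  qed
  define g where "g h = Pi *v nuhat h" for h
  define f where "f h = Pi *v nu h" for h
  have gS: "g (Suc h) = Bh *v g h" for h
    unfolding g_def nuhat matpow_Suc_mv Mht_def[symmetric] Bh_def
    by (simp add: matrix_vector_mul_assoc[symmetric] v1)
  have fS: "f (Suc h) = B *v f h" for h
    unfolding f_def nu matpow_Suc_mv Mt_def[symmetric] B_def
    by (simp add: matrix_vector_mul_assoc[symmetric] v1)
  have g0: "g 0 = Pi *v v0" "f 0 = Pi *v v0" by (simp_all add: g_def f_def nuhat nu)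
  have gb: "norm (g h) \<le> c * (1 + d) ^ h" for h
  proof (induction h)
    case 0 thus ?case by (simp add: g0 c_def)
  next
    case (Suc h)
    have "norm (g (Suc h)) \<le> opnorm2 Bh * norm (g h)" unfolding gS by (rule op_mv)
    also have "\<dots> \<le> (1 + d) * (c * (1 + d) ^ h)"
      using Suc nBh nn by (intro mult_mono) (simp_all add: op_nonneg)
    finally show ?case by (simp add: algebra_simps)
  qed
  have eb: "norm (g h - f h) \<le> c * ((1 + d) ^ h - 1)" for h
  proof (induction h)
    case 0 thus ?case by (simp add: g0)
  next
    case (Suc h)
    have "g (Suc h) - f (Suc h) = B *v (g h - f h) + (Bh - B) *v g h"
      unfolding gS fS by (simp add: matrix_vector_mult_diff_distrib matrix_vector_mult_diff_rdistrib)
    hence "norm (g (Suc h) - f (Suc h)) \<le> norm (B *v (g h - f h)) + norm ((Bh - B) *v g h)"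
      by (simp add: norm_triangle_ineq)
    also have "norm (B *v (g h - f h)) \<le> norm (g h - f h)"
      using op_mv[of B "g h - f h"] nB
      by (meson mult_left_le_one_le norm_ge_zero op_nonneg order_trans)
    also have "norm ((Bh - B) *v g h) \<le> d * (c * (1 + d) ^ h)"
      using op_mv[of "Bh - B" "g h"] nBd gb[of h] nn by (metis mult_left_mono order_trans)
    finally show ?case using Suc by (simp add: algebra_simps)
  qed
  have Rib: "norm (Ri *v z) \<le> a * norm (Pi *v z)" for z
  proof -
    have "Ri *v z = (Ri ** P) *v (Pi *v z)" by (simp add: matrix_vector_mul_assoc[symmetric] v1)
    moreover have "opnorm2 (Ri ** P) = a" unfolding a_def
      using op_tr[of "P ** Ri"] by (simp add: matrix_transpose_mul pf(1) sf(5))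
    ultimately show ?thesis using op_mv by metis
  qed
  have tb: "\<bar>(real N *\<^sub>R (nuhat h v* Shi) - nu h v* matrix_inv Sig) \<bullet> w\<bar>
      \<le> c * a * norm (Ri *v w) * ((1 + d) ^ h * (1 + x) - 1)" for h w
  proof -
    define rw where "rw = Ri *v w"
    have "(real N *\<^sub>R (nuhat h v* Shi) - nu h v* matrix_inv Sig) \<bullet> w
        = nuhat h \<bullet> ((real N *\<^sub>R Shi) *v w) - nu h \<bullet> (matrix_inv Sig *v w)"
      by (simp add: inner_diff_left dot_lmul_matrix scaleR_mv)
    also have "real N *\<^sub>R Shi = matrix_inv Sig + DX" unfolding DX_def by simp
    also have "nuhat h \<bullet> ((matrix_inv Sig + DX) *v w) - nu h \<bullet> (matrix_inv Sig *v w)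
        = (nuhat h - nu h) \<bullet> (matrix_inv Sig *v w) + nuhat h \<bullet> (DX *v w)"
      by (simp add: matrix_vector_mult_add_rdistrib inner_add_right inner_diff_left)
    also have "matrix_inv Sig *v w = Ri *v rw" by (simp add: sf(6) rw_def matrix_vector_mul_assoc)
    also have "DX *v w = Ri *v ((R ** DX ** R) *v rw)"
      by (simp add: rw_def matrix_vector_mul_assoc[symmetric] v1)
    also have "(nuhat h - nu h) \<bullet> (Ri *v rw) = (Ri *v (nuhat h - nu h)) \<bullet> rw"
      using dot_tr[of "nuhat h - nu h" Ri rw] sf(5) by simp
    also have "nuhat h \<bullet> (Ri *v ((R ** DX ** R) *v rw)) = (Ri *v nuhat h) \<bullet> ((R ** DX ** R) *v rw)"
      using dot_tr[of "nuhat h" Ri] sf(5) by simp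
    finally have eq: "(real N *\<^sub>R (nuhat h v* Shi) - nu h v* matrix_inv Sig) \<bullet> w =
       (Ri *v (nuhat h - nu h)) \<bullet> rw + (Ri *v nuhat h) \<bullet> ((R ** DX ** R) *v rw)" .
    have t1: "\<bar>(Ri *v (nuhat h - nu h)) \<bullet> rw\<bar> \<le> a * (c * ((1 + d) ^ h - 1)) * norm rw"
    proof -
      have "\<bar>(Ri *v (nuhat h - nu h)) \<bullet> rw\<bar> \<le> norm (Ri *v (nuhat h - nu h)) * norm rw"
        by (rule Cauchy_Schwarz_ineq2)
      also have "norm (Ri *v (nuhat h - nu h)) \<le> a * (c * ((1 + d) ^ h - 1))"
      proof -
        have "Pi *v (nuhat h - nu h) = g h - f h"
          by (simp add: g_def f_def matrix_vector_mult_diff_distrib)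
        hence "norm (Ri *v (nuhat h - nu h)) \<le> a * norm (g h - f h)" using Rib[of "nuhat h - nu h"] by simp
        also have "\<dots> \<le> a * (c * ((1 + d) ^ h - 1))" by (rule mult_left_mono[OF eb nn(4)])
        finally show ?thesis .
      qed
      finally show ?thesis by (simp add: mult_right_mono)
    qed
    have t2: "\<bar>(Ri *v nuhat h) \<bullet> ((R ** DX ** R) *v rw)\<bar> \<le> a * (c * (1 + d) ^ h) * (x * norm rw)"
    proof -
      have "\<bar>(Ri *v nuhat h) \<bullet> ((R ** DX ** R) *v rw)\<bar> \<le> norm (Ri *v nuhat h) * norm ((R ** DX ** R) *v rw)"
        by (rule Cauchy_Schwarz_ineq2)
      also have "\<dots> \<le> (a * (c * (1 + d) ^ h)) * (x * norm rw)"
      proof (rule mult_mono)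
        show "norm (Ri *v nuhat h) \<le> a * (c * (1 + d) ^ h)"
          using Rib[of "nuhat h"] mult_left_mono[OF gb[of h] nn(4)] unfolding g_def by (rule order_trans)
        show "norm ((R ** DX ** R) *v rw) \<le> x * norm rw" unfolding x_def by (rule op_mv)
        show "0 \<le> a * (c * (1 + d) ^ h)" using nn by simp
      qed simp
      finally show ?thesis .
    qed
    have "\<bar>(real N *\<^sub>R (nuhat h v* Shi) - nu h v* matrix_inv Sig) \<bullet> w\<bar>
       \<le> a * (c * ((1 + d) ^ h - 1)) * norm rw + a * (c * (1 + d) ^ h) * (x * norm rw)"
      unfolding eq using t1 t2 abs_triangle_ineq by (smt (verit))
    also have "\<dots> = c * a * norm rw * ((1 + d) ^ h * (1 + x) - 1)" by (simp add: algebra_simps)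
    finally show ?thesis by (simp add: rw_def)
  qed
  have "\<bar>\<Sum>h=0..H. (real N *\<^sub>R (nuhat h v* matrix_inv Shat) - nu h v* matrix_inv Sig) \<bullet> DW h\<bar>
      \<le> (\<Sum>h=0..H. \<bar>(real N *\<^sub>R (nuhat h v* matrix_inv Shat) - nu h v* matrix_inv Sig) \<bullet> DW h\<bar>)"
    by (rule sum_abs)
  also have "\<dots> \<le> (\<Sum>h=0..H. c * a * norm (Ri *v DW h) * ((1 + d) ^ h * (1 + x) - 1))"
    by (rule sum_mono) (use tb in \<open>simp add: Shi_def\<close>)
  finally show ?thesis
    by (simp add: csq a_def d_def x_def DX_def Shi_def R_def Ri_def P_def Pi_def)
qed


theorem lemma7:
  fixes phi :: "'s \<Rightarrow> 'a \<Rightarrow> real^'d"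
    and pol :: "'s \<Rightarrow> 'a measure" and xi0 :: "'s measure"
    and Q :: "nat \<Rightarrow> 's \<Rightarrow> 'a \<Rightarrow> real"
    and H N :: nat and lam :: real
    and s s' :: "nat \<Rightarrow> 's" and a :: "nat \<Rightarrow> 'a" and r' :: "nat \<Rightarrow> real"
    and M Sig SigP :: "real^'d^'d"
  defines "Shat \<equiv> Sigma_hat phi lam N s a"
    and "Mhat \<equiv> M_hat phi pol lam N s a s'"
    and "v0 \<equiv> nu0 phi pol xi0"
    and "nu \<equiv> (\<lambda>h. matpow (transpose M) h *v nu0 phi pol xi0)"
    and "nuhat \<equiv> (\<lambda>h. matpow (transpose (M_hat phi pol lam N s a s')) h *v nu0 phi pol xi0)"
    and "DX \<equiv> real N *\<^sub>R matrix_inv (Sigma_hat phi lam N s a) - matrix_inv Sig"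
    and "DM \<equiv> M_hat phi pol lam N s a s' - M"
    and "DY \<equiv> (1 / real N) *\<^sub>R (\<Sum>n=1..N. outer (phi (s n) (a n)) (phi_pi phi pol (s' n))) - Sig ** M"
    and "DW \<equiv> (\<lambda>h. (1 / real N) *\<^sub>R (\<Sum>n=1..N.
                 (Q h (s n) (a n) - r' n - V_pi Q pol H (h + 1) (s' n)) *\<^sub>R phi (s n) (a n)))"
    and "kappa1 \<equiv> cond2 (minvsqrt Sig ** SigP ** minvsqrt Sig)"
  assumes N_pos: "0 < N" and lam_nonneg: "0 \<le> lam"
    and Sig_spd: "spd_mat Sig" and SigP_spd: "spd_mat SigP"
    and Shat_inv: "invertible Shat"
    and M_contr: "opnorm2 (msqrt SigP ** M ** minvsqrt SigP) \<le> 1"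
  shows "(\<bar>\<Sum>h=0..H. (real N *\<^sub>R (nuhat h v* matrix_inv Shat) - nu h v* matrix_inv Sig) \<bullet> DW h\<bar> \<le> (\<Sum>h=0..H. sqrt (v0 \<bullet> (matrix_inv SigP *v v0))
              * opnorm2 (msqrt SigP ** minvsqrt Sig) * norm (minvsqrt Sig *v DW h)
              * ((1 + opnorm2 (msqrt SigP ** DM ** minvsqrt SigP)) ^ h
                   * (1 + opnorm2 (msqrt Sig ** DX ** msqrt Sig)) - 1)))
    \<and> (opnorm2 (msqrt SigP ** DM ** minvsqrt SigP) \<le> sqrt kappa1 *
           ((1 + opnorm2 (msqrt Sig ** DX ** msqrt Sig))
             * (1 + opnorm2 (minvsqrt Sig ** DY ** minvsqrt Sig)) - 1))
    \<and> (opnorm2 ((1 / real N) *\<^sub>R (minvsqrt Sig ** Shat ** minvsqrt Sig) - mat 1) \<le> 1/2 \<longrightarrow>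
           opnorm2 (msqrt Sig ** DX ** msqrt Sig)
             \<le> 2 * opnorm2 ((1 / real N) *\<^sub>R (minvsqrt Sig ** Shat ** minvsqrt Sig) - mat 1))"
proof -
  define C where "C = (\<Sum>n=1..N. outer (phi (s n) (a n)) (phi_pi phi pol (s' n)))"
  have Mh: "Mhat = matrix_inv Shat ** C" by (simp add: Mhat_def Shat_def M_hat_def C_def)
  have p1: "\<bar>\<Sum>h=0..H. (real N *\<^sub>R (nuhat h v* matrix_inv Shat) - nu h v* matrix_inv Sig) \<bullet> DW h\<bar>
     \<le> (\<Sum>h=0..H. sqrt (v0 \<bullet> (matrix_inv SigP *v v0))
              * opnorm2 (msqrt SigP ** minvsqrt Sig) * norm (minvsqrt Sig *v DW h)
              * ((1 + opnorm2 (msqrt SigP ** (Mhat - M) ** minvsqrt SigP)) ^ h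
                   * (1 + opnorm2 (msqrt Sig ** (real N *\<^sub>R matrix_inv Shat - matrix_inv Sig) ** msqrt Sig)) - 1))"
    by (rule part1[OF Sig_spd SigP_spd Shat_inv N_pos M_contr])
       (simp_all add: nu_def nuhat_def v0_def Mhat_def)
  have p2: "opnorm2 (msqrt SigP ** (matrix_inv Shat ** C - M) ** minvsqrt SigP) \<le>
     sqrt (cond2 (minvsqrt Sig ** SigP ** minvsqrt Sig)) *
           ((1 + opnorm2 (msqrt Sig ** (real N *\<^sub>R matrix_inv Shat - matrix_inv Sig) ** msqrt Sig))
             * (1 + opnorm2 (minvsqrt Sig ** ((1 / real N) *\<^sub>R C - Sig ** M) ** minvsqrt Sig)) - 1)"
    by (rule part2[OF Sig_spd SigP_spd Shat_inv N_pos M_contr])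
  have p3: "opnorm2 ((1 / real N) *\<^sub>R (minvsqrt Sig ** Shat ** minvsqrt Sig) - mat 1) \<le> 1/2 \<longrightarrow>
     opnorm2 (msqrt Sig ** (real N *\<^sub>R matrix_inv Shat - matrix_inv Sig) ** msqrt Sig)
     \<le> 2 * opnorm2 ((1 / real N) *\<^sub>R (minvsqrt Sig ** Shat ** minvsqrt Sig) - mat 1)"
    using part3[OF Sig_spd Shat_inv N_pos] by blast
  have DXe: "DX = real N *\<^sub>R matrix_inv Shat - matrix_inv Sig" by (simp add: DX_def Shat_def)
  have DMe: "DM = Mhat - M" by (simp add: DM_def Mhat_def)
  have DYe: "DY = (1 / real N) *\<^sub>R C - Sig ** M" by (simp add: DY_def C_def)
  have k: "kappa1 = cond2 (minvsqrt Sig ** SigP ** minvsqrt Sig)" by (simp add: kappa1_def)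
  show ?thesis unfolding DXe DMe DYe k using p1 p2[folded Mh] p3 by blast
qed

end
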